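(* Consider the event-triggered distributed estimator described in the context, and suppose: (i) the communication graph is connected, i.e. $\lambda_2(\mathcal{L})>0$; (ii) $G=\sum_{i=1}^N H_i^TH_i$ is full rank; (iii) the step sizes are $\alpha(t)=\frac{a}{(t+1)^{\tau_1}}$ and $\beta(t)=\frac{b}{(t+1)^{\tau_2}}$ with $a,b>0$, $0<\tau_2\le\tau_1\le 1$, and $\tau_1>\max\{\tau_2+\frac{1}{2+\epsilon_1},0.5\}$, where $\epsilon_1>0$ is such that $\mathbb{E}\{\|V(t)\|^{2+\epsilon_1}\}<\infty$. Let $\rho_0=\min_{j\in\mathcal{V}}\rho_j$. If $\rho_0>\tau_1-\tau_2$, then for every agent $i\in\mathcal{V}$ the estimate sequence is asymptotically unbiased: $\lim_{t\to\infty}\mathbb{E}\{x_i(t)\}=\theta$.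
   Context: An unknown parameter $\theta\in\mathbb{R}^n$ is observed by $N$ agents $\mathcal{V}=\{1,\dots,N\}$ via $y_i(t)=H_i\theta+v_i(t)$, $t=0,1,2,\dots$, where $H_i\in\mathbb{R}^{m_i\times n}$ is known and the noise $v_i(t)\in\mathbb{R}^{m_i}$ is zero mean with covariance $R_i$. The stacked noise $V(t)=[v_1(t)^T,\dots,v_N(t)^T]^T$ is i.i.d. over time (noises of different agents at the same time may be correlated). Agents communicate over an undirected graph without self-loops with adjacency matrix $\mathcal{A}=[a_{ij}]\in\{0,1\}^{N\times N}$, neighbor sets $\mathcal{N}_i=\{j: a_{ij}=1\}$, degree matrix $\mathcal{D}$ and Laplacian $\mathcal{L}=\mathcal{D}-\mathcal{A}$. Each agent $i$ has a threshold exponent $\rho_i>0$. Agent $i$ keeps an estimate $x_i(t)\in\mathbb{R}^n$ (arbitrary deterministic initial value $x_i(0)$, which is the first transmitted value). Let $t_k^i$ be the latest triggering (transmission) time of agent $i$. At time $t$, agent $i$ triggers (broadcasts $x_i(t)$ to its neighbors, which then becomes its latest transmitted value) iff $\|x_i(t)-x_i(t_k^i)\|>\frac{1}{(t+1)^{\rho_i}}$. Denoting by $x_j(t_k^j)$ the latest value transmitted by agent $j$ up to and including time $t$, the estimator is $x_i(t+1)=x_i(t)+\alpha(t)H_i^T\big(y_i(t)-H_ix_i(t)\big)+\beta(t)\sum_{j\in\mathcal{N}_i}\big(x_j(t_k^j)-x_i(t)\big)$. *)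

theory Defs
  imports "HOL-Analysis.Analysis" "HOL-Probability.Probability"
begin

text \<open>Agents are indexed 0..N-1. The observation matrix H_i (m_i x n) is given by its rows:
  row k of H_i (for k < m i) is the vector H i k. Vectors of R^{m_i} are functions nat => real,
  only components k < m i are relevant.\<close>

definition Hmul :: "(nat \<Rightarrow> nat \<Rightarrow> real^'n) \<Rightarrow> nat \<Rightarrow> real^'n \<Rightarrow> nat \<Rightarrow> real" where
  "Hmul H i x = (\<lambda>k. H i k \<bullet> x)"

definition HTmul :: "(nat \<Rightarrow> nat \<Rightarrow> real^'n) \<Rightarrow> (nat \<Rightarrow> nat) \<Rightarrow> nat \<Rightarrow> (nat \<Rightarrow> real) \<Rightarrow> real^'n" where
  "HTmul H m i w = (\<Sum>k<m i. w k *\<^sub>R H i k)"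

definition Gmat :: "nat \<Rightarrow> (nat \<Rightarrow> nat \<Rightarrow> real^'n) \<Rightarrow> (nat \<Rightarrow> nat) \<Rightarrow> real^'n^'n" where
  "Gmat N H m = (\<Sum>i<N. \<Sum>k<m i. (\<chi> r c. (H i k $ r) * (H i k $ c)))"

text \<open>State of the estimator at time t: pair (x, l) where x i = x_i(t) and
  l i = latest value transmitted by agent i up to and including time t.
  y t i k is component k of the measurement y_i(t); alpha, beta step sizes.\<close>

fun est :: "nat \<Rightarrow> (nat \<Rightarrow> nat \<Rightarrow> bool) \<Rightarrow> (nat \<Rightarrow> nat \<Rightarrow> real^'n) \<Rightarrow> (nat \<Rightarrow> nat)
   \<Rightarrow> (nat \<Rightarrow> real) \<Rightarrow> (nat \<Rightarrow> real) \<Rightarrow> (nat \<Rightarrow> real) \<Rightarrow> (nat \<Rightarrow> real^'n)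
   \<Rightarrow> (nat \<Rightarrow> nat \<Rightarrow> nat \<Rightarrow> real) \<Rightarrow> nat \<Rightarrow> (nat \<Rightarrow> real^'n) \<times> (nat \<Rightarrow> real^'n)" where
  "est N adj H m alpha beta \<rho> x0 y 0 = (x0, x0)"
| "est N adj H m alpha beta \<rho> x0 y (Suc t) =
     (let x = fst (est N adj H m alpha beta \<rho> x0 y t);
          l = snd (est N adj H m alpha beta \<rho> x0 y t);
          x' = (\<lambda>i. x i + alpha t *\<^sub>R HTmul H m i (\<lambda>k. y t i k - Hmul H i (x i) k)
                       + beta t *\<^sub>R (\<Sum>j\<in>{j. j < N \<and> adj i j}. l j - x i));
          l' = (\<lambda>i. if norm (x' i - l i) > 1 / (real (Suc t) + 1) powr \<rho> i then x' i else l i)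
      in (x', l'))"

text \<open>Stacked noise vector V(t), as an element of the product space indexed by (agent, component).\<close>
definition stackV :: "nat \<Rightarrow> (nat \<Rightarrow> nat) \<Rightarrow> (nat \<Rightarrow> nat \<Rightarrow> real) \<Rightarrow> nat \<times> nat \<Rightarrow> real" where
  "stackV N m w = (\<lambda>(i, k). if i < N \<and> k < m i then w i k else 0)"

definition normV :: "nat \<Rightarrow> (nat \<Rightarrow> nat) \<Rightarrow> (nat \<Rightarrow> nat \<Rightarrow> real) \<Rightarrow> real" where
  "normV N m w = sqrt (\<Sum>i<N. \<Sum>k<m i. (w i k)\<^sup>2)"

definition stack_space :: "(nat \<times> nat \<Rightarrow> real) measure" where
  "stack_space = Pi\<^sub>M UNIV (\<lambda>_. borel)"

end

theory Submission
  imports Defs "HOL-Real_Asymp.Real_Asymp"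
begin


definition Sn :: "nat \<Rightarrow> (nat \<Rightarrow> real^'n) \<Rightarrow> real" where
  "Sn N e = (\<Sum>i<N. (norm (e i))\<^sup>2)"
definition Ed :: "nat \<Rightarrow> (nat \<Rightarrow> nat \<Rightarrow> bool) \<Rightarrow> (nat \<Rightarrow> real^'n) \<Rightarrow> real" where
  "Ed N adj e = (\<Sum>i<N. \<Sum>j\<in>{j. j < N \<and> adj i j}. (norm (e i - e j))\<^sup>2)"
definition Hq :: "nat \<Rightarrow> (nat \<Rightarrow> nat \<Rightarrow> real^'n) \<Rightarrow> (nat \<Rightarrow> nat) \<Rightarrow> (nat \<Rightarrow> real^'n) \<Rightarrow> real" where
  "Hq N H m e = (\<Sum>i<N. \<Sum>k<m i. (H i k \<bullet> e i)\<^sup>2)"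
definition hc :: "nat \<Rightarrow> (nat \<Rightarrow> nat \<Rightarrow> real^'n) \<Rightarrow> (nat \<Rightarrow> nat) \<Rightarrow> real" where
  "hc N H m = 1 + (\<Sum>i<N. \<Sum>k<m i. (norm (H i k))\<^sup>2)"
definition Fm :: "nat \<Rightarrow> (nat \<Rightarrow> nat \<Rightarrow> bool) \<Rightarrow> (nat \<Rightarrow> nat \<Rightarrow> real^'n) \<Rightarrow> (nat \<Rightarrow> nat)
   \<Rightarrow> real \<Rightarrow> real \<Rightarrow> (nat \<Rightarrow> real^'n) \<Rightarrow> nat \<Rightarrow> real^'n" where
  "Fm N adj H m al be e = (\<lambda>i. e i - al *\<^sub>R HTmul H m i (Hmul H i (e i))
       + be *\<^sub>R (\<Sum>j\<in>{j. j < N \<and> adj i j}. e j - e i))"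

lemma inner_HT: "x \<bullet> HTmul H m i (Hmul H i x) = (\<Sum>k<m i. (H i k \<bullet> x)\<^sup>2)"
  unfolding HTmul_def Hmul_def
  by (simp add: inner_sum_right power2_eq_square inner_commute)

lemma norm_HT: "(norm (HTmul H m i (Hmul H i x)))\<^sup>2
   \<le> (\<Sum>k<m i. (norm (H i k))\<^sup>2) * (\<Sum>k<m i. (H i k \<bullet> x)\<^sup>2)"
proof -
  have "norm (HTmul H m i (Hmul H i x)) \<le> (\<Sum>k<m i. \<bar>H i k \<bullet> x\<bar> * norm (H i k))"
    unfolding HTmul_def Hmul_def
    by (rule order_trans[OF norm_sum]) simp
  hence "(norm (HTmul H m i (Hmul H i x)))\<^sup>2 \<le> (\<Sum>k<m i. \<bar>H i k \<bullet> x\<bar> * norm (H i k))\<^sup>2"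
    by (simp add: power_mono)
  also have "\<dots> \<le> (\<Sum>k<m i. (\<bar>H i k \<bullet> x\<bar>)\<^sup>2) * (\<Sum>k<m i. (norm (H i k))\<^sup>2)"
    by (rule Cauchy_Schwarz_ineq_sum)
  finally show ?thesis by (simp add: mult.commute)
qed

lemma norm_sum_sq:
  fixes w :: "nat \<Rightarrow> 'b::real_normed_vector"
  shows "(norm (\<Sum>j\<in>S. w j))\<^sup>2 \<le> real (card S) * (\<Sum>j\<in>S. (norm (w j))\<^sup>2)"
proof -
  have "(norm (\<Sum>j\<in>S. w j))\<^sup>2 \<le> (\<Sum>j\<in>S. norm (w j))\<^sup>2"
    by (simp add: power_mono norm_sum)
  also have "\<dots> \<le> (\<Sum>j\<in>S. (norm (w j))\<^sup>2) * card S"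
    by (rule sum_squared_le_sum_of_squares)
  finally show ?thesis by (simp add: mult.commute)
qed

lemma norm_add_sq: "(norm (a + b :: 'b::real_normed_vector))\<^sup>2 \<le> 2 * (norm a)\<^sup>2 + 2 * (norm b)\<^sup>2"
proof -
  have "(norm (a + b))\<^sup>2 \<le> (norm a + norm b)\<^sup>2"
    by (simp add: power_mono norm_triangle_ineq)
  also have "\<dots> \<le> 2 * (norm a)\<^sup>2 + 2 * (norm b)\<^sup>2"
    by (smt (verit) sum_squared_le_sum_of_squares_2 power2_sum zero_le_power2 power2_diff)
  finally show ?thesis .
qed

lemma nb_sum: fixes N :: nat and P :: "nat \<Rightarrow> bool" shows "(\<Sum>j\<in>{j. j < N \<and> P j}. f j) = (\<Sum>j<N. if P j then f j else 0)"
proof -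
  have "{j. j < N \<and> P j} = {j\<in>{..<N}. P j}" by auto
  then show ?thesis by (metis (no_types) sum.inter_filter[OF finite_lessThan])
qed

lemma sym_sum:
  assumes sym: "\<And>i j. adj i j = adj j i"
  shows "(\<Sum>i<N. \<Sum>j\<in>{j. j < N \<and> adj i j}. e i \<bullet> (e i - e j)) = Ed N adj e / 2"
proof -
  have S: "{j. j < N \<and> adj i j} = {j\<in>{..<N}. adj i j}" for i by auto
  define g where "g i j = (if adj i j then e i \<bullet> (e i - e j) else 0)" for i j
  have T: "(\<Sum>i<N. \<Sum>j\<in>{j. j < N \<and> adj i j}. e i \<bullet> (e i - e j)) = (\<Sum>i<N. \<Sum>j<N. g i j)"
    unfolding g_def nb_sum by simp
  have T2: "(\<Sum>i<N. \<Sum>j<N. g i j) = (\<Sum>i<N. \<Sum>j<N. g j i)"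
    by (rule sum.swap)
  have nn: "(norm (e i - e j))\<^sup>2 = e i \<bullet> (e i - e j) + e j \<bullet> (e j - e i)" for i j
    by (simp add: power2_norm_eq_inner inner_diff_left inner_diff_right inner_commute)
  have E: "Ed N adj e = (\<Sum>i<N. \<Sum>j<N. g i j + g j i)"
    unfolding Ed_def g_def nb_sum
    by (auto intro!: sum.cong simp: sym nn)
  show ?thesis using T T2 E by (simp add: sum.distrib)
qed

lemma hc_i: "i < N \<Longrightarrow> (\<Sum>k<m i. (norm (H i k))\<^sup>2) \<le> hc N H m"
proof -
  assume "i < N"
  hence "(\<Sum>k<m i. (norm (H i k))\<^sup>2) \<le> (\<Sum>i<N. \<Sum>k<m i. (norm (H i k))\<^sup>2)"
    by (intro member_le_sum) (auto intro: sum_nonneg)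
  thus ?thesis unfolding hc_def by simp
qed

lemma hc_pos: "hc N H m \<ge> 1"
  unfolding hc_def by (simp add: sum_nonneg)

lemma contr_i:
  fixes e :: "nat \<Rightarrow> real^'n"
  assumes al: "al \<ge> 0" and be: "be \<ge> 0" and i: "i < N"
  shows "(norm (Fm N adj H m al be e i))\<^sup>2 \<le> (norm (e i))\<^sup>2 - 2*al*(\<Sum>k<m i. (H i k \<bullet> e i)\<^sup>2)
     - 2*be*(\<Sum>j\<in>{j. j < N \<and> adj i j}. e i \<bullet> (e i - e j))
     + 2*al\<^sup>2*hc N H m*(\<Sum>k<m i. (H i k \<bullet> e i)\<^sup>2)
     + 2*be\<^sup>2*real N*(\<Sum>j\<in>{j. j < N \<and> adj i j}. (norm (e i - e j))\<^sup>2)"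
proof -
  define A where "A = HTmul H m i (Hmul H i (e i))"
  define L where "L = (\<Sum>j\<in>{j. j < N \<and> adj i j}. e j - e i)"
  define g where "g = al *\<^sub>R A - be *\<^sub>R L"
  define Q where "Q = (\<Sum>k<m i. (H i k \<bullet> e i)\<^sup>2)"
  define P where "P = (\<Sum>j\<in>{j. j < N \<and> adj i j}. e i \<bullet> (e i - e j))"
  define D where "D = (\<Sum>j\<in>{j. j < N \<and> adj i j}. (norm (e i - e j))\<^sup>2)"
  have F: "Fm N adj H m al be e i = e i - g"
    unfolding Fm_def g_def A_def L_def by (simp add: algebra_simps)
  have sq: "(norm (e i - g))\<^sup>2 = (norm (e i))\<^sup>2 - 2 * (e i \<bullet> g) + (norm g)\<^sup>2"
    by (simp add: power2_norm_eq_inner inner_diff_left inner_diff_right inner_commute)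
  have eA: "e i \<bullet> A = Q" unfolding A_def Q_def by (rule inner_HT)
  have eL: "e i \<bullet> L = - P" unfolding L_def P_def
    by (simp add: inner_sum_right inner_diff_right sum_negf[symmetric] algebra_simps)
  have eg: "e i \<bullet> g = al * Q + be * P" unfolding g_def
    by (simp add: inner_diff_right eA eL)
  have Q0: "Q \<ge> 0" unfolding Q_def by (simp add: sum_nonneg)
  have nA: "(norm A)\<^sup>2 \<le> hc N H m * Q"
    using norm_HT[of H m i "e i"] hc_i[OF i, of H m] Q0 unfolding A_def Q_def
    by (meson mult_right_mono order_trans)
  have card: "real (card {j. j < N \<and> adj i j}) \<le> real N"
  proof -
    have "card {j. j < N \<and> adj i j} \<le> card {..<N}" by (rule card_mono) auto
    thus ?thesis by simp
  qed
  have D0: "D \<ge> 0" unfolding D_def by (simp add: sum_nonneg)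
  have nL: "(norm L)\<^sup>2 \<le> real N * D"
  proof -
    have "(norm L)\<^sup>2 \<le> real (card {j. j < N \<and> adj i j}) * (\<Sum>j\<in>{j. j < N \<and> adj i j}. (norm (e j - e i))\<^sup>2)"
      unfolding L_def by (rule norm_sum_sq)
    also have "\<dots> = real (card {j. j < N \<and> adj i j}) * D"
      unfolding D_def by (simp add: norm_minus_commute)
    also have "\<dots> \<le> real N * D" using card D0 by (rule mult_right_mono)
    finally show ?thesis .
  qed
  have ng: "(norm g)\<^sup>2 \<le> 2 * al\<^sup>2 * (norm A)\<^sup>2 + 2 * be\<^sup>2 * (norm L)\<^sup>2"
    using norm_add_sq[of "al *\<^sub>R A" "- (be *\<^sub>R L)"] al be unfolding g_def
    by (simp add: power_mult_distrib)
  have ng2: "(norm g)\<^sup>2 \<le> 2 * al\<^sup>2 * hc N H m * Q + 2 * be\<^sup>2 * real N * D"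
  proof -
    have "2 * al\<^sup>2 * (norm A)\<^sup>2 \<le> 2 * al\<^sup>2 * (hc N H m * Q)"
      using nA by (intro mult_left_mono) auto
    moreover have "2 * be\<^sup>2 * (norm L)\<^sup>2 \<le> 2 * be\<^sup>2 * (real N * D)"
      using nL by (intro mult_left_mono) auto
    ultimately show ?thesis using ng by (simp add: mult.assoc)
  qed
  show ?thesis
    unfolding F sq eg using ng2 unfolding Q_def[symmetric] P_def[symmetric] D_def[symmetric]
    by simp
qed

lemma contr:
  fixes e :: "nat \<Rightarrow> real^'n"
  assumes sym: "\<And>i j. adj i j = adj j i"
    and al: "al \<ge> 0" and be: "be \<ge> 0" and alh: "2 * al * hc N H m \<le> 1" and beN: "4 * be * real N \<le> 1"
  shows "Sn N (Fm N adj H m al be e) \<le> Sn N e - al * Hq N H m e - be / 2 * Ed N adj e"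
proof -
  have "Sn N (Fm N adj H m al be e) \<le> (\<Sum>i<N. (norm (e i))\<^sup>2 - 2*al*(\<Sum>k<m i. (H i k \<bullet> e i)\<^sup>2)
     - 2*be*(\<Sum>j\<in>{j. j < N \<and> adj i j}. e i \<bullet> (e i - e j))
     + 2*al\<^sup>2*hc N H m*(\<Sum>k<m i. (H i k \<bullet> e i)\<^sup>2)
     + 2*be\<^sup>2*real N*(\<Sum>j\<in>{j. j < N \<and> adj i j}. (norm (e i - e j))\<^sup>2))"
    unfolding Sn_def by (intro sum_mono contr_i al be) auto
  also have "\<dots> = Sn N e - 2*al*Hq N H m e - 2*be*(\<Sum>i<N. \<Sum>j\<in>{j. j < N \<and> adj i j}. e i \<bullet> (e i - e j)) + 2*al\<^sup>2*hc N H m*Hq N H m e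
      + 2*be\<^sup>2*real N*Ed N adj e"
    unfolding Sn_def Hq_def Ed_def
    by (simp add: sum.distrib sum_subtractf sum_distrib_left)
  also have "\<dots> = Sn N e - 2*al*Hq N H m e - 2*be*(Ed N adj e / 2) + 2*al\<^sup>2*hc N H m*Hq N H m e
      + 2*be\<^sup>2*real N*Ed N adj e"
    unfolding sym_sum[OF sym] ..
  also have "\<dots> \<le> Sn N e - al * Hq N H m e - be / 2 * Ed N adj e"
  proof -
    have H0: "Hq N H m e \<ge> 0" unfolding Hq_def by (simp add: sum_nonneg)
    have E0: "Ed N adj e \<ge> 0" unfolding Ed_def by (simp add: sum_nonneg)
    have "(2 * al * hc N H m) * (al * Hq N H m e) \<le> 1 * (al * Hq N H m e)"
      using alh al H0 by (intro mult_right_mono) auto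
    moreover have "(4 * be * real N) * (be / 2 * Ed N adj e) \<le> 1 * (be / 2 * Ed N adj e)"
      using beN be E0 by (intro mult_right_mono) auto
    ultimately show ?thesis by (simp add: power2_eq_square algebra_simps)
  qed
  finally show ?thesis .
qed



lemma Ed_nonneg: "Ed N adj e \<ge> 0" unfolding Ed_def by (simp add: sum_nonneg)
lemma Hq_nonneg: "Hq N H m e \<ge> 0" unfolding Hq_def by (simp add: sum_nonneg)
lemma Sn_nonneg: "Sn N e \<ge> 0" unfolding Sn_def by (simp add: sum_nonneg)

lemma edge_le_Ed:
  fixes e :: "nat \<Rightarrow> real^'n"
  assumes "q < N" "r < N" "adj q r"
  shows "(norm (e q - e r))\<^sup>2 \<le> Ed N adj e"
proof -
  have "(norm (e q - e r))\<^sup>2 \<le> (\<Sum>j\<in>{j. j < N \<and> adj q j}. (norm (e q - e j))\<^sup>2)"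
    using assms by (intro member_le_sum) auto
  also have "\<dots> \<le> Ed N adj e" unfolding Ed_def
    using assms by (intro member_le_sum[where f="\<lambda>i. \<Sum>j\<in>{j. j < N \<and> adj i j}. (norm (e i - e j))\<^sup>2"])
      (auto intro: sum_nonneg)
  finally show ?thesis .
qed

lemma path_bound:
  assumes "(p, q) \<in> {(p, q). p < N \<and> q < N \<and> adj p q}\<^sup>*"
  shows "\<exists>K\<ge>0. \<forall>e::nat \<Rightarrow> real^'n. (norm (e p - e q))\<^sup>2 \<le> K * Ed N adj e"
  using assms
proof (induction rule: rtrancl_induct)
  case base
  then show ?case by (auto intro: Ed_nonneg)
next
  case (step q r)
  then obtain K where K: "K \<ge> 0" "\<And>e::nat \<Rightarrow> real^'n. (norm (e p - e q))\<^sup>2 \<le> K * Ed N adj e" by blast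
  have "(norm (e p - e r))\<^sup>2 \<le> (2 * K + 2) * Ed N adj e" for e :: "nat \<Rightarrow> real^'n"
  proof -
    have "(norm (e p - e r))\<^sup>2 = (norm ((e p - e q) + (e q - e r)))\<^sup>2" by simp
    also have "\<dots> \<le> 2 * (norm (e p - e q))\<^sup>2 + 2 * (norm (e q - e r))\<^sup>2" by (rule norm_add_sq)
    also have "\<dots> \<le> 2 * (K * Ed N adj e) + 2 * Ed N adj e"
      using K(2)[of e] edge_le_Ed[of q N r adj e] step(2) by auto
    finally show ?thesis by (simp add: algebra_simps)
  qed
  then show ?case using K(1) by (intro exI[of _ "2 * K + 2"]) auto
qed

lemma Gmat_mult: "Gmat N H m *v z = (\<Sum>i<N. \<Sum>k<m i. (H i k \<bullet> z) *\<^sub>R H i k)"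
  unfolding Gmat_def
  apply (simp add: vec_eq_iff matrix_vector_mult_def inner_vec_def sum_distrib_left sum_distrib_right
      sum.swap[of _ UNIV] mult.assoc mult.left_commute)
  apply (simp add: mult_ac)
  done

lemma posdef:
  fixes H :: "nat \<Rightarrow> nat \<Rightarrow> real^'n"
  assumes rk: "rank (Gmat N H m) = CARD('n)"
  shows "\<exists>g>0. \<forall>z::real^'n. g * (norm z)\<^sup>2 \<le> (\<Sum>i<N. \<Sum>k<m i. (H i k \<bullet> z)\<^sup>2)"
proof -
  define q where "q z = (\<Sum>i<N. \<Sum>k<m i. (H i k \<bullet> z)\<^sup>2)" for z :: "real^'n"
  have q0: "q z = 0 \<Longrightarrow> z = 0" for z
  proof -
    assume "q z = 0"
    hence "\<forall>i<N. \<forall>k<m i. H i k \<bullet> z = 0"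
      unfolding q_def by (simp add: sum_nonneg sum_nonneg_eq_0_iff)
    hence "Gmat N H m *v z = 0" by (simp add: Gmat_mult)
    hence "Gmat N H m *v z = Gmat N H m *v 0" by simp
    moreover have "inj ((*v) (Gmat N H m))" using rk full_rank_injective by blast
    ultimately show "z = 0" by (meson injD)
  qed
  have cont: "continuous_on (sphere 0 1) q"
    unfolding q_def by (intro continuous_intros)
  have ne: "sphere (0::real^'n) 1 \<noteq> {}" by simp
  obtain u where u: "u \<in> sphere 0 1" "\<And>y. y \<in> sphere 0 1 \<Longrightarrow> q u \<le> q y"
    using continuous_attains_inf[OF compact_sphere ne cont] by blast
  have qnn: "q z \<ge> 0" for z unfolding q_def by (simp add: sum_nonneg)
  have "u \<noteq> 0" using u(1) by auto
  hence gpos: "q u > 0" using q0 qnn[of u] by force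
  have hom: "q (c *\<^sub>R z) = c\<^sup>2 * q z" for c z
    unfolding q_def by (simp add: sum_distrib_left power_mult_distrib)
  have "q u * (norm z)\<^sup>2 \<le> q z" for z
  proof (cases "z = 0")
    case True then show ?thesis using qnn[of 0] by simp
  next
    case False
    define w where "w = (1 / norm z) *\<^sub>R z"
    have w: "w \<in> sphere 0 1" using False unfolding w_def by (simp add: norm_scaleR)
    have z: "z = norm z *\<^sub>R w" using False unfolding w_def by simp
    have "q z = (norm z)\<^sup>2 * q w" by (subst z, rule hom)
    moreover have "q u \<le> q w" using u(2) w by blast
    ultimately show ?thesis by (simp add: mult.commute mult_right_mono)
  qed
  then show ?thesis using gpos unfolding q_def by blast
qed

lemma sq_add_le: "((a::real) + b)\<^sup>2 \<le> 2 * a\<^sup>2 + 2 * b\<^sup>2"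
proof -
  have "0 \<le> (a - b)\<^sup>2" by simp
  thus ?thesis by (simp add: power2_eq_square algebra_simps)
qed

lemma inner_sq_le: "(h \<bullet> w)\<^sup>2 \<le> (norm h)\<^sup>2 * (norm w)\<^sup>2"
proof -
  have "\<bar>h \<bullet> w\<bar> \<le> norm h * norm w" by (rule Cauchy_Schwarz_ineq2)
  hence "\<bar>h \<bullet> w\<bar>\<^sup>2 \<le> (norm h * norm w)\<^sup>2" by (intro power_mono) auto
  thus ?thesis by (simp add: power_mult_distrib)
qed

lemma coerc:
  fixes H :: "nat \<Rightarrow> nat \<Rightarrow> real^'n"
  assumes conn: "\<forall>i<N. \<forall>j<N. (i, j) \<in> {(p, q). p < N \<and> q < N \<and> adj p q}\<^sup>*"
    and N1: "N \<ge> 1" and rk: "rank (Gmat N H m) = CARD('n)" and kap: "\<kappa> > 0"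
  shows "\<exists>c>0. \<forall>e::nat \<Rightarrow> real^'n. c * Sn N e \<le> \<kappa> / 2 * Ed N adj e + Hq N H m e"
proof -
  have "\<forall>i\<in>{..<N}. \<exists>K. K \<ge> 0 \<and> (\<forall>e::nat \<Rightarrow> real^'n. (norm (e 0 - e i))\<^sup>2 \<le> K * Ed N adj e)"
    using conn N1 path_bound[of 0 _ N adj] by auto
  then obtain K where K: "\<And>i. i < N \<Longrightarrow> K i \<ge> 0"
    "\<And>i (e::nat \<Rightarrow> real^'n). i < N \<Longrightarrow> (norm (e 0 - e i))\<^sup>2 \<le> K i * Ed N adj e"
    by (metis lessThan_iff bchoice)
  define C where "C = (\<Sum>i<N. K i)"
  have C0: "C \<ge> 0" unfolding C_def using K(1) by (intro sum_nonneg) auto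
  obtain g where g: "g > 0" "\<And>z::real^'n. g * (norm z)\<^sup>2 \<le> (\<Sum>i<N. \<Sum>k<m i. (H i k \<bullet> z)\<^sup>2)"
    using posdef[OF rk] by blast
  define h where "h = hc N H m"
  have h1: "h \<ge> 1" unfolding h_def by (rule hc_pos)
  define K1 where "K1 = (2 * g + 4 * real N * h) * C"
  define K2 where "K2 = 4 * real N"
  have K10: "K1 \<ge> 0" unfolding K1_def using g h1 C0 by simp
  have K20: "K2 \<ge> 0" unfolding K2_def by simp
  define \<mu> where "\<mu> = min (\<kappa> / 2) 1"
  have mu: "\<mu> > 0" "\<mu> \<le> \<kappa> / 2" "\<mu> \<le> 1" unfolding \<mu>_def using kap by auto
  have main: "g * Sn N e \<le> K1 * Ed N adj e + K2 * Hq N H m e" for e :: "nat \<Rightarrow> real^'n"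
  proof -
    define D where "D = (\<Sum>i<N. (norm (e 0 - e i))\<^sup>2)"
    have D0: "D \<ge> 0" unfolding D_def by (simp add: sum_nonneg)
    have DC: "D \<le> C * Ed N adj e"
      unfolding D_def C_def sum_distrib_right by (intro sum_mono K(2)) auto
    have qb: "(\<Sum>i<N. \<Sum>k<m i. (H i k \<bullet> e 0)\<^sup>2) \<le> 2 * Hq N H m e + 2 * h * D"
    proof -
      have "(\<Sum>i<N. \<Sum>k<m i. (H i k \<bullet> e 0)\<^sup>2) \<le>
         (\<Sum>i<N. \<Sum>k<m i. 2 * (H i k \<bullet> e i)\<^sup>2 + 2 * ((norm (H i k))\<^sup>2 * (norm (e 0 - e i))\<^sup>2))"
      proof (intro sum_mono)
        fix i k
        have "H i k \<bullet> e 0 = H i k \<bullet> e i + H i k \<bullet> (e 0 - e i)" by (simp add: inner_diff_right)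
        hence "(H i k \<bullet> e 0)\<^sup>2 \<le> 2 * (H i k \<bullet> e i)\<^sup>2 + 2 * (H i k \<bullet> (e 0 - e i))\<^sup>2"
          using sq_add_le by simp
        also have "\<dots> \<le> 2 * (H i k \<bullet> e i)\<^sup>2 + 2 * ((norm (H i k))\<^sup>2 * (norm (e 0 - e i))\<^sup>2)"
          using inner_sq_le[of "H i k" "e 0 - e i"] by simp
        finally show "(H i k \<bullet> e 0)\<^sup>2 \<le> 2 * (H i k \<bullet> e i)\<^sup>2 + 2 * ((norm (H i k))\<^sup>2 * (norm (e 0 - e i))\<^sup>2)" .
      qed
      also have "\<dots> = 2 * Hq N H m e + 2 * (\<Sum>i<N. (\<Sum>k<m i. (norm (H i k))\<^sup>2) * (norm (e 0 - e i))\<^sup>2)"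
        unfolding Hq_def by (simp add: sum.distrib sum_distrib_left sum_distrib_right)
      also have "\<dots> \<le> 2 * Hq N H m e + 2 * (\<Sum>i<N. h * (norm (e 0 - e i))\<^sup>2)"
        unfolding h_def using hc_i by (auto intro!: sum_mono mult_right_mono)
      also have "\<dots> = 2 * Hq N H m e + 2 * h * D"
        unfolding D_def by (simp add: sum_distrib_left mult.assoc)
      finally show ?thesis .
    qed
    have ge0: "g * (norm (e 0))\<^sup>2 \<le> 2 * Hq N H m e + 2 * h * D"
      using g(2)[of "e 0"] qb by linarith
    have Sb: "Sn N e \<le> 2 * D + 2 * real N * (norm (e 0))\<^sup>2"
    proof -
      have "Sn N e \<le> (\<Sum>i<N. 2 * (norm (e 0 - e i))\<^sup>2 + 2 * (norm (e 0))\<^sup>2)"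
        unfolding Sn_def
      proof (intro sum_mono)
        fix i
        have "(norm (e i))\<^sup>2 = (norm (e 0 + (e i - e 0)))\<^sup>2" by simp
        also have "\<dots> \<le> 2 * (norm (e 0))\<^sup>2 + 2 * (norm (e i - e 0))\<^sup>2" by (rule norm_add_sq)
        finally show "(norm (e i))\<^sup>2 \<le> 2 * (norm (e 0 - e i))\<^sup>2 + 2 * (norm (e 0))\<^sup>2"
          by (simp add: norm_minus_commute)
      qed
      also have "\<dots> = 2 * D + 2 * real N * (norm (e 0))\<^sup>2"
        unfolding D_def by (simp add: sum.distrib sum_distrib_left)
      finally show ?thesis .
    qed
    have "g * Sn N e \<le> g * (2 * D + 2 * real N * (norm (e 0))\<^sup>2)"
      using Sb g(1) by (intro mult_left_mono) auto
    also have "\<dots> = 2 * g * D + 2 * real N * (g * (norm (e 0))\<^sup>2)" by (simp add: algebra_simps)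
    also have "\<dots> \<le> 2 * g * D + 2 * real N * (2 * Hq N H m e + 2 * h * D)"
      using ge0 by (intro add_left_mono mult_left_mono) auto
    also have "\<dots> = (2 * g + 4 * real N * h) * D + K2 * Hq N H m e"
      unfolding K2_def by (simp add: algebra_simps)
    also have "\<dots> \<le> (2 * g + 4 * real N * h) * (C * Ed N adj e) + K2 * Hq N H m e"
      using DC g h1 by (intro add_right_mono mult_left_mono) auto
    finally show ?thesis unfolding K1_def by (simp add: mult.assoc)
  qed
  define c where "c = \<mu> * g / (K1 + K2 + 1)"
  have cpos: "c > 0" unfolding c_def using mu g K10 K20 by simp
  have "c * Sn N e \<le> \<kappa> / 2 * Ed N adj e + Hq N H m e" for e :: "nat \<Rightarrow> real^'n"
  proof -
    have E0: "Ed N adj e \<ge> 0" by (rule Ed_nonneg)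
    have H0: "Hq N H m e \<ge> 0" by (rule Hq_nonneg)
    have "(K1 + K2 + 1) * (c * Sn N e) = \<mu> * (g * Sn N e)"
      unfolding c_def using K10 K20 by simp
    also have "\<dots> \<le> \<mu> * (K1 * Ed N adj e + K2 * Hq N H m e)"
      using main mu by (intro mult_left_mono) auto
    also have "\<dots> = K1 * (\<mu> * Ed N adj e) + K2 * (\<mu> * Hq N H m e)" by (simp add: algebra_simps)
    also have "\<dots> \<le> K1 * (\<kappa> / 2 * Ed N adj e) + K2 * (1 * Hq N H m e)"
      using mu E0 H0 K10 K20 by (intro add_mono mult_left_mono mult_right_mono) auto
    also have "\<dots> \<le> (K1 + K2 + 1) * (\<kappa> / 2 * Ed N adj e + Hq N H m e)"
    proof -
      have p: "K1 * Hq N H m e \<ge> 0" "\<kappa> / 2 * Ed N adj e \<ge> 0" "K2 * (\<kappa> / 2 * Ed N adj e) \<ge> 0"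
        "K2 * Hq N H m e \<ge> 0"
        using K10 K20 E0 H0 kap by auto
      have "(K1 + K2 + 1) * (\<kappa> / 2 * Ed N adj e + Hq N H m e) = K1 * (\<kappa> / 2 * Ed N adj e)
         + K1 * Hq N H m e + K2 * (\<kappa> / 2 * Ed N adj e) + K2 * Hq N H m e + \<kappa> / 2 * Ed N adj e + Hq N H m e"
        by (simp add: algebra_simps)
      then show ?thesis using p H0 by linarith
    qed
    finally show ?thesis using K10 K20
      by (smt (verit) mult_le_cancel_left_pos)
  qed
  then show ?thesis using cpos by blast
qed



lemma harm_shift: "harm (T + n) - harm T = (\<Sum>k<n. inverse (real (Suc (T + k))) :: real)"
  by (induction n) (simp_all add: harm_Suc)

lemma scalar_conv:
  fixes u \<gamma> w :: "nat \<Rightarrow> real"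
  assumes u0: "\<And>t. 0 \<le> u t"
    and ev: "eventually (\<lambda>t. 0 \<le> \<gamma> t \<and> \<gamma> t \<le> 1 \<and> cz / (real t + 1) \<le> \<gamma> t
              \<and> u (Suc t) \<le> (1 - \<gamma> t) * u t + w t) sequentially"
    and cz: "cz > 0"
    and wlim: "\<And>\<epsilon>. \<epsilon> > 0 \<Longrightarrow> eventually (\<lambda>t. w t \<le> \<epsilon> * \<gamma> t) sequentially"
  shows "u \<longlonglongrightarrow> 0"
proof (rule LIMSEQ_I)
  fix r :: real assume r: "r > 0"
  define \<epsilon> where "\<epsilon> = r / 2"
  have eps: "\<epsilon> > 0" unfolding \<epsilon>_def using r by simp
  obtain T where T: "\<And>t. t \<ge> T \<Longrightarrow> 0 \<le> \<gamma> t \<and> \<gamma> t \<le> 1 \<and> cz / (real t + 1) \<le> \<gamma> t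
              \<and> u (Suc t) \<le> (1 - \<gamma> t) * u t + w t \<and> w t \<le> \<epsilon> * \<gamma> t"
    using eventually_conj[OF ev wlim[OF eps]] unfolding eventually_sequentially by blast
  define v where "v t = max (u t - \<epsilon>) 0" for t
  have v0: "v t \<ge> 0" for t unfolding v_def by simp
  have vstep: "v (Suc t) \<le> exp (- \<gamma> t) * v t" if t: "t \<ge> T" for t
  proof -
    note Tt = T[OF t]
    have "u (Suc t) - \<epsilon> \<le> (1 - \<gamma> t) * (u t - \<epsilon>)"
      using Tt by (simp add: algebra_simps)
    also have "\<dots> \<le> (1 - \<gamma> t) * v t"
      using Tt unfolding v_def by (intro mult_left_mono) auto
    finally have a: "u (Suc t) - \<epsilon> \<le> (1 - \<gamma> t) * v t" .
    have b: "0 \<le> (1 - \<gamma> t) * v t" using Tt v0[of t] by simp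
    have "v (Suc t) \<le> (1 - \<gamma> t) * v t" using a b by (simp add: v_def[of "Suc t"])
    also have "\<dots> \<le> exp (- \<gamma> t) * v t"
      using exp_ge_add_one_self[of "- \<gamma> t"] v0[of t] by (intro mult_right_mono) auto
    finally show ?thesis .
  qed
  have iter: "v (T + n) \<le> exp (- (\<Sum>k<n. \<gamma> (T + k))) * v T" for n
  proof (induction n)
    case 0 then show ?case by simp
  next
    case (Suc n)
    have "v (T + Suc n) \<le> exp (- \<gamma> (T + n)) * v (T + n)" using vstep[of "T + n"] by simp
    also have "\<dots> \<le> exp (- \<gamma> (T + n)) * (exp (- (\<Sum>k<n. \<gamma> (T + k))) * v T)"
      using Suc by (intro mult_left_mono) auto
    also have "\<dots> = exp (- (\<Sum>k<Suc n. \<gamma> (T + k))) * v T"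
      by (simp add: exp_add[symmetric] exp_minus_inverse algebra_simps exp_diff)
    finally show ?case .
  qed
  define hT where "hT = (harm T :: real)"
  have low: "(\<Sum>k<n. \<gamma> (T + k)) \<ge> cz * (ln (real (T + n) + 1) - hT)" for n
  proof -
    have "cz * (ln (real (T + n) + 1) - hT) \<le> cz * (harm (T + n) - hT)"
      using ln_le_harm[of "T + n"] cz by (intro mult_left_mono) auto
    also have "\<dots> = (\<Sum>k<n. cz / (real (T + k) + 1))"
      unfolding hT_def harm_shift by (simp add: sum_distrib_left divide_inverse add.commute)
    also have "\<dots> \<le> (\<Sum>k<n. \<gamma> (T + k))"
    proof (intro sum_mono)
      fix k show "cz / (real (T + k) + 1) \<le> \<gamma> (T + k)" using T[of "T + k"] by simp
    qed
    finally show ?thesis .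
  qed
  define Z where "Z n = v T * exp (cz * hT) * (real (T + n) + 1) powr (- cz)" for n
  have Zb: "v (T + n) \<le> Z n" for n
  proof -
    have "v (T + n) \<le> exp (- (\<Sum>k<n. \<gamma> (T + k))) * v T" by (rule iter)
    also have "\<dots> \<le> exp (- (cz * (ln (real (T + n) + 1) - hT))) * v T"
      using low[of n] v0[of T] by (intro mult_right_mono) auto
    also have "\<dots> = Z n"
      unfolding Z_def by (simp add: powr_def algebra_simps exp_add[symmetric] exp_diff)
    finally show ?thesis .
  qed
  have "(\<lambda>n. (real (T + n) + 1) powr (- cz)) \<longlonglongrightarrow> 0"
    using cz by real_asymp
  hence "Z \<longlonglongrightarrow> v T * exp (cz * hT) * 0"
    unfolding Z_def by (intro tendsto_mult tendsto_const)
  hence "eventually (\<lambda>n. Z n < \<epsilon>) sequentially"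
    using eps by (simp add: order_tendstoD(2))
  then obtain n0 where n0: "\<And>n. n \<ge> n0 \<Longrightarrow> Z n < \<epsilon>" unfolding eventually_sequentially by blast
  show "\<exists>no. \<forall>n\<ge>no. norm (u n - 0) < r"
  proof (intro exI allI impI)
    fix n assume n: "n \<ge> T + n0"
    then obtain k where k: "n = T + k" "k \<ge> n0" by (metis add_le_imp_le_left le_add1 le_add_diff_inverse le_trans)
    have "v n < \<epsilon>" using Zb[of k] n0[OF k(2)] k(1) by simp
    hence "u n - \<epsilon> < \<epsilon>" unfolding v_def by linarith
    hence "u n < r" unfolding \<epsilon>_def by simp
    thus "norm (u n - 0) < r" using u0[of n] by simp
  qed
qed



lemma est_Suc_fst: "fst (est N adj H m al be \<rho> x0 y (Suc t)) i =
   fst (est N adj H m al be \<rho> x0 y t) i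
   + al t *\<^sub>R HTmul H m i (\<lambda>k. y t i k - Hmul H i (fst (est N adj H m al be \<rho> x0 y t) i) k)
   + be t *\<^sub>R (\<Sum>j\<in>{j. j < N \<and> adj i j}. snd (est N adj H m al be \<rho> x0 y t) j - fst (est N adj H m al be \<rho> x0 y t) i)"
  by (simp add: Let_def)

lemma est_Suc_snd: "snd (est N adj H m al be \<rho> x0 y (Suc t)) i =
   (if norm (fst (est N adj H m al be \<rho> x0 y (Suc t)) i - snd (est N adj H m al be \<rho> x0 y t) i)
        > 1 / (real (Suc t) + 1) powr \<rho> i
    then fst (est N adj H m al be \<rho> x0 y (Suc t)) i else snd (est N adj H m al be \<rho> x0 y t) i)"
  by (simp add: Let_def)

lemma est_gap: "norm (fst (est N adj H m al be \<rho> x0 y t) i - snd (est N adj H m al be \<rho> x0 y t) i)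
    \<le> 1 / (real t + 1) powr \<rho> i"
proof (cases t)
  case 0 then show ?thesis by simp
next
  case (Suc s)
  show ?thesis unfolding Suc est_Suc_snd[of N adj H m al be \<rho> x0 y s i]
    by (auto simp: not_less)
qed

lemma integ_step:
  fixes xf :: "'a \<Rightarrow> real^'n"
  assumes prob: "prob_space M" and xf: "integrable M xf" and lf: "\<And>j. j \<in> S \<Longrightarrow> integrable M (lf j)"
    and vv: "\<And>k. k < m i \<Longrightarrow> integrable M (\<lambda>\<omega>. vv \<omega> k)"
  shows "integrable M (\<lambda>\<omega>. xf \<omega> + al *\<^sub>R HTmul H m i (\<lambda>k. Hmul H i \<theta> k + vv \<omega> k - Hmul H i (xf \<omega>) k)
      + be *\<^sub>R (\<Sum>j\<in>S. lf j \<omega> - xf \<omega>))"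
proof -
  interpret P: prob_space M by (rule prob)
  have c: "integrable M (\<lambda>\<omega>. H i k \<bullet> \<theta> + vv \<omega> k - H i k \<bullet> xf \<omega>)" if "k < m i" for k
  proof (intro Bochner_Integration.integrable_diff Bochner_Integration.integrable_add)
    show "integrable M (\<lambda>\<omega>. H i k \<bullet> \<theta>)" by (rule P.integrable_const)
    show "integrable M (\<lambda>\<omega>. vv \<omega> k)" using vv that .
    show "integrable M (\<lambda>\<omega>. H i k \<bullet> xf \<omega>)" using xf by (rule integrable_inner_right)
  qed
  have s1: "integrable M (\<lambda>\<omega>. \<Sum>k<m i. (H i k \<bullet> \<theta> + vv \<omega> k - H i k \<bullet> xf \<omega>) *\<^sub>R H i k)"
    using c by (intro Bochner_Integration.integrable_sum integrable_scaleR_left) auto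
  have s2: "integrable M (\<lambda>\<omega>. \<Sum>j\<in>S. lf j \<omega> - xf \<omega>)"
    using lf xf by (intro Bochner_Integration.integrable_sum Bochner_Integration.integrable_diff) auto
  show ?thesis unfolding HTmul_def Hmul_def
    using xf s1 s2 by (intro Bochner_Integration.integrable_add integrable_scaleR_right) auto
qed

lemma integ_step_val:
  fixes xf :: "'a \<Rightarrow> real^'n"
  assumes prob: "prob_space M" and xf: "integrable M xf" and lf: "\<And>j. j \<in> S \<Longrightarrow> integrable M (lf j)"
    and vv: "\<And>k. k < m i \<Longrightarrow> integrable M (\<lambda>\<omega>. vv \<omega> k) \<and> integral\<^sup>L M (\<lambda>\<omega>. vv \<omega> k) = 0"
  shows "integral\<^sup>L M (\<lambda>\<omega>. xf \<omega> + al *\<^sub>R HTmul H m i (\<lambda>k. Hmul H i \<theta> k + vv \<omega> k - Hmul H i (xf \<omega>) k)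
      + be *\<^sub>R (\<Sum>j\<in>S. lf j \<omega> - xf \<omega>)) - \<theta>
    = (integral\<^sup>L M xf - \<theta>) - al *\<^sub>R HTmul H m i (Hmul H i (integral\<^sup>L M xf - \<theta>))
      + be *\<^sub>R (\<Sum>j\<in>S. integral\<^sup>L M (lf j) - integral\<^sup>L M xf)"
proof -
  interpret P: prob_space M by (rule prob)
  have c: "integrable M (\<lambda>\<omega>. H i k \<bullet> \<theta> + vv \<omega> k - H i k \<bullet> xf \<omega>)" if "k < m i" for k
  proof (intro Bochner_Integration.integrable_diff Bochner_Integration.integrable_add)
    show "integrable M (\<lambda>\<omega>. H i k \<bullet> \<theta>)" by (rule P.integrable_const)
    show "integrable M (\<lambda>\<omega>. vv \<omega> k)" using vv that by blast
    show "integrable M (\<lambda>\<omega>. H i k \<bullet> xf \<omega>)" using xf by (rule integrable_inner_right)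
  qed
  have ci: "integral\<^sup>L M (\<lambda>\<omega>. H i k \<bullet> \<theta> + vv \<omega> k - H i k \<bullet> xf \<omega>) = H i k \<bullet> \<theta> - H i k \<bullet> integral\<^sup>L M xf"
    if "k < m i" for k
  proof -
    have a: "integrable M (\<lambda>\<omega>. vv \<omega> k)" "integral\<^sup>L M (\<lambda>\<omega>. vv \<omega> k) = 0" using vv that by auto
    have "integral\<^sup>L M (\<lambda>\<omega>. H i k \<bullet> \<theta> + vv \<omega> k - H i k \<bullet> xf \<omega>)
       = integral\<^sup>L M (\<lambda>\<omega>. H i k \<bullet> \<theta> + vv \<omega> k) - integral\<^sup>L M (\<lambda>\<omega>. H i k \<bullet> xf \<omega>)"
      using a xf by (intro Bochner_Integration.integral_diff Bochner_Integration.integrable_add P.integrable_const) auto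
    also have "\<dots> = H i k \<bullet> \<theta> - H i k \<bullet> integral\<^sup>L M xf"
      using a xf by (subst Bochner_Integration.integral_add) (auto simp: P.prob_space)
    finally show ?thesis .
  qed
  have s1: "integrable M (\<lambda>\<omega>. \<Sum>k<m i. (H i k \<bullet> \<theta> + vv \<omega> k - H i k \<bullet> xf \<omega>) *\<^sub>R H i k)"
    using c by (intro Bochner_Integration.integrable_sum integrable_scaleR_left) auto
  have s2: "integrable M (\<lambda>\<omega>. \<Sum>j\<in>S. lf j \<omega> - xf \<omega>)"
    using lf xf by (intro Bochner_Integration.integrable_sum Bochner_Integration.integrable_diff) auto
  have i1: "integral\<^sup>L M (\<lambda>\<omega>. \<Sum>k<m i. (H i k \<bullet> \<theta> + vv \<omega> k - H i k \<bullet> xf \<omega>) *\<^sub>R H i k)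
      = (\<Sum>k<m i. (H i k \<bullet> \<theta> - H i k \<bullet> integral\<^sup>L M xf) *\<^sub>R H i k)"
    using c ci by (subst Bochner_Integration.integral_sum) (auto intro!: sum.cong)
  have i2: "integral\<^sup>L M (\<lambda>\<omega>. \<Sum>j\<in>S. lf j \<omega> - xf \<omega>) = (\<Sum>j\<in>S. integral\<^sup>L M (lf j) - integral\<^sup>L M xf)"
    using lf xf by (subst Bochner_Integration.integral_sum) (auto intro!: sum.cong)
  have tot: "integral\<^sup>L M (\<lambda>\<omega>. xf \<omega> + al *\<^sub>R HTmul H m i (\<lambda>k. Hmul H i \<theta> k + vv \<omega> k - Hmul H i (xf \<omega>) k)
      + be *\<^sub>R (\<Sum>j\<in>S. lf j \<omega> - xf \<omega>))
     = integral\<^sup>L M xf + al *\<^sub>R (\<Sum>k<m i. (H i k \<bullet> \<theta> - H i k \<bullet> integral\<^sup>L M xf) *\<^sub>R H i k)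
       + be *\<^sub>R (\<Sum>j\<in>S. integral\<^sup>L M (lf j) - integral\<^sup>L M xf)"
    unfolding HTmul_def Hmul_def
    using xf s1 s2 i1 i2
    by (simp add: Bochner_Integration.integral_add)
  have "(\<Sum>k<m i. (H i k \<bullet> \<theta> - H i k \<bullet> integral\<^sup>L M xf) *\<^sub>R H i k)
      = - HTmul H m i (Hmul H i (integral\<^sup>L M xf - \<theta>))"
    unfolding HTmul_def Hmul_def
    by (simp add: inner_diff_right sum_negf[symmetric] scaleR_diff_left algebra_simps)
  then show ?thesis unfolding tot by (simp add: algebra_simps)
qed

lemma stoch_integrable:
  fixes M :: "'a measure" and v :: "nat \<Rightarrow> nat \<Rightarrow> 'a \<Rightarrow> nat \<Rightarrow> real"
    and H :: "nat \<Rightarrow> nat \<Rightarrow> real^'n"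
  assumes prob: "prob_space M"
    and noise: "\<And>t i k. i < N \<Longrightarrow> k < m i \<Longrightarrow> integrable M (\<lambda>\<omega>. v t i \<omega> k)"
  shows "i < N \<Longrightarrow> integrable M (\<lambda>\<omega>. fst (est N adj H m al be \<rho> x0 (\<lambda>t i k. Hmul H i \<theta> k + v t i \<omega> k) t) i)
       \<and> integrable M (\<lambda>\<omega>. snd (est N adj H m al be \<rho> x0 (\<lambda>t i k. Hmul H i \<theta> k + v t i \<omega> k) t) i)"
proof (induction t arbitrary: i)
  interpret P: prob_space M by (rule prob)
  case 0
  then show ?case by simp
next
  interpret P: prob_space M by (rule prob)
  case (Suc t)
  define X where "X t \<omega> = est N adj H m al be \<rho> x0 (\<lambda>t i k. Hmul H i \<theta> k + v t i \<omega> k) t" for t \<omega>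
  have IH: "\<And>j. j < N \<Longrightarrow> integrable M (\<lambda>\<omega>. fst (X t \<omega>) j) \<and> integrable M (\<lambda>\<omega>. snd (X t \<omega>) j)"
    using Suc.IH unfolding X_def by blast
  have xi: "integrable M (\<lambda>\<omega>. fst (X (Suc t) \<omega>) i)"
    unfolding X_def est_Suc_fst
    by (rule integ_step[OF prob]) (use IH Suc.prems noise in \<open>auto simp: X_def\<close>)
  have li: "integrable M (\<lambda>\<omega>. snd (X t \<omega>) i)" using IH Suc.prems by blast
  have mx[measurable]: "(\<lambda>\<omega>. fst (X (Suc t) \<omega>) i) \<in> borel_measurable M"
    using xi by (rule borel_measurable_integrable)
  have ml[measurable]: "(\<lambda>\<omega>. snd (X t \<omega>) i) \<in> borel_measurable M"
    using li by (rule borel_measurable_integrable)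
  have meas: "(\<lambda>\<omega>. snd (X (Suc t) \<omega>) i) \<in> borel_measurable M"
    unfolding X_def est_Suc_snd unfolding X_def[symmetric]
    by measurable
  have "integrable M (\<lambda>\<omega>. snd (X (Suc t) \<omega>) i)"
  proof (rule Bochner_Integration.integrable_bound[OF _ meas])
    show "integrable M (\<lambda>\<omega>. norm (fst (X (Suc t) \<omega>) i) + norm (snd (X t \<omega>) i))"
      using xi li by auto
    show "AE \<omega> in M. norm (snd (X (Suc t) \<omega>) i) \<le> norm (norm (fst (X (Suc t) \<omega>) i) + norm (snd (X t \<omega>) i))"
      unfolding X_def est_Suc_snd unfolding X_def[symmetric] by auto
  qed
  then show ?case using xi unfolding X_def by blast
qed



lemma sqrt_one_minus: "0 \<le> x \<Longrightarrow> x \<le> 1 \<Longrightarrow> sqrt (1 - x) \<le> 1 - x / 2"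
proof -
  assume x: "0 \<le> x" "x \<le> 1"
  have "1 - x \<le> (1 - x / 2)\<^sup>2" by (simp add: power2_eq_square algebra_simps)
  hence "sqrt (1 - x) \<le> sqrt ((1 - x / 2)\<^sup>2)" by (rule real_sqrt_le_mono)
  also have "\<dots> = 1 - x / 2" using x by simp
  finally show ?thesis .
qed

lemma u_step:
  fixes e e' p :: "nat \<Rightarrow> real^'n"
  assumes sym: "\<And>i j. adj i j = adj j i"
    and al: "al \<ge> 0" and be: "be \<ge> 0" and alh: "2 * al * hc N H m \<le> 1" and beN: "4 * be * real N \<le> 1"
    and cal: "c * al \<le> 1" and c: "c > 0" and kap: "\<kappa> * al \<le> be" "\<kappa> \<ge> 0"
    and coer: "c * Sn N e \<le> \<kappa> / 2 * Ed N adj e + Hq N H m e"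
    and rec: "\<And>i. i < N \<Longrightarrow> e' i = Fm N adj H m al be e i + p i"
    and pb: "\<And>i. i < N \<Longrightarrow> norm (p i) \<le> P"
  shows "L2_set (\<lambda>i. norm (e' i)) {..<N} \<le> (1 - c * al / 2) * L2_set (\<lambda>i. norm (e i)) {..<N} + real N * P"
proof -
  define F where "F = Fm N adj H m al be e"
  have "L2_set (\<lambda>i. norm (e' i)) {..<N} \<le> L2_set (\<lambda>i. norm (F i) + norm (p i)) {..<N}"
    using rec unfolding F_def by (intro L2_set_mono) (auto simp: norm_triangle_ineq)
  also have "\<dots> \<le> L2_set (\<lambda>i. norm (F i)) {..<N} + L2_set (\<lambda>i. norm (p i)) {..<N}"
    by (rule L2_set_triangle_ineq)
  also have "L2_set (\<lambda>i. norm (p i)) {..<N} \<le> real N * P"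
  proof -
    have "L2_set (\<lambda>i. norm (p i)) {..<N} \<le> (\<Sum>i<N. norm (p i))" by (rule L2_set_le_sum) simp
    also have "\<dots> \<le> real (card {..<N}) * P" using pb by (intro sum_bounded_above) auto
    finally show ?thesis by simp
  qed
  also have "L2_set (\<lambda>i. norm (F i)) {..<N} \<le> (1 - c * al / 2) * L2_set (\<lambda>i. norm (e i)) {..<N}"
  proof -
    have S: "L2_set (\<lambda>i. norm (f i)) {..<N} = sqrt (Sn N f)" for f :: "nat \<Rightarrow> real^'n"
      unfolding L2_set_def Sn_def ..
    have E0: "Ed N adj e \<ge> 0" by (rule Ed_nonneg)
    have "Sn N F \<le> Sn N e - al * Hq N H m e - be / 2 * Ed N adj e"
      unfolding F_def by (rule contr[OF sym al be alh beN])
    also have "\<dots> \<le> Sn N e - al * (\<kappa> / 2 * Ed N adj e + Hq N H m e)"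
    proof -
      have "(\<kappa> * al) / 2 * Ed N adj e \<le> be / 2 * Ed N adj e"
        using kap E0 by (intro mult_right_mono) auto
      thus ?thesis by (simp add: algebra_simps)
    qed
    also have "\<dots> \<le> Sn N e - al * (c * Sn N e)"
      using coer al by (simp add: mult_left_mono)
    also have "\<dots> = (1 - c * al) * Sn N e" by (simp add: algebra_simps)
    finally have "Sn N F \<le> (1 - c * al) * Sn N e" .
    hence "sqrt (Sn N F) \<le> sqrt (1 - c * al) * sqrt (Sn N e)"
      by (metis real_sqrt_le_mono real_sqrt_mult)
    also have "\<dots> \<le> (1 - c * al / 2) * sqrt (Sn N e)"
      using sqrt_one_minus[of "c * al"] c al cal Sn_nonneg[of N e] by (intro mult_right_mono) auto
    finally show ?thesis unfolding S .
  qed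
  finally show ?thesis by simp
qed



theorem theorem2:
  fixes M :: "'a measure"
    and N :: nat
    and adj :: "nat \<Rightarrow> nat \<Rightarrow> bool"
    and H :: "nat \<Rightarrow> nat \<Rightarrow> real^'n"
    and m :: "nat \<Rightarrow> nat"
    and \<theta> :: "real^'n"
    and v :: "nat \<Rightarrow> nat \<Rightarrow> 'a \<Rightarrow> nat \<Rightarrow> real"
    and R :: "nat \<Rightarrow> nat \<Rightarrow> nat \<Rightarrow> real"
    and \<rho> :: "nat \<Rightarrow> real"
    and x0 :: "nat \<Rightarrow> real^'n"
    and a b \<tau>1 \<tau>2 \<epsilon>1 :: real
  assumes prob: "prob_space M"
    and N_pos: "N \<ge> 1"
    and adj_sym: "\<And>i j. adj i j = adj j i"
    and adj_irrefl: "\<And>i. \<not> adj i i"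
    and connected: "\<forall>i<N. \<forall>j<N. (i, j) \<in> {(p, q). p < N \<and> q < N \<and> adj p q}\<^sup>*"
    and G_full_rank: "rank (Gmat N H m) = CARD('n)"
    and noise_rv: "\<And>t i k. (\<lambda>\<omega>. v t i \<omega> k) \<in> borel_measurable M"
    and noise_zero_mean: "\<And>t i k. i < N \<Longrightarrow> k < m i \<Longrightarrow>
          integrable M (\<lambda>\<omega>. v t i \<omega> k) \<and> integral\<^sup>L M (\<lambda>\<omega>. v t i \<omega> k) = 0"
    and noise_cov: "\<And>t i k l. i < N \<Longrightarrow> k < m i \<Longrightarrow> l < m i \<Longrightarrow>
          integrable M (\<lambda>\<omega>. v t i \<omega> k * v t i \<omega> l) \<and>
          integral\<^sup>L M (\<lambda>\<omega>. v t i \<omega> k * v t i \<omega> l) = R i k l"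
    and noise_indep: "prob_space.indep_vars M (\<lambda>_. stack_space)
          (\<lambda>t \<omega>. stackV N m (\<lambda>i k. v t i \<omega> k)) UNIV"
    and noise_ident: "\<And>t. distr M stack_space (\<lambda>\<omega>. stackV N m (\<lambda>i k. v t i \<omega> k))
          = distr M stack_space (\<lambda>\<omega>. stackV N m (\<lambda>i k. v 0 i \<omega> k))"
    and eps_pos: "\<epsilon>1 > 0"
    and moment: "\<And>t. integrable M (\<lambda>\<omega>. normV N m (\<lambda>i k. v t i \<omega> k) powr (2 + \<epsilon>1))"
    and a_pos: "a > 0" and b_pos: "b > 0"
    and tau: "0 < \<tau>2" "\<tau>2 \<le> \<tau>1" "\<tau>1 \<le> 1"
    and tau1_big: "\<tau>1 > max (\<tau>2 + 1 / (2 + \<epsilon>1)) 0.5"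
    and rho_pos: "\<And>j. j < N \<Longrightarrow> \<rho> j > 0"
    and rho0: "Min (\<rho> ` {..<N}) > \<tau>1 - \<tau>2"
  shows "\<forall>i<N. (\<lambda>t. integral\<^sup>L M (\<lambda>\<omega>.
            fst (est N adj H m (\<lambda>t. a / (real t + 1) powr \<tau>1) (\<lambda>t. b / (real t + 1) powr \<tau>2) \<rho> x0
                  (\<lambda>t i k. Hmul H i \<theta> k + v t i \<omega> k) t) i)) \<longlonglongrightarrow> \<theta>"
proof -
  interpret P: prob_space M by (rule prob)
  define al where "al = (\<lambda>t::nat. a / (real t + 1) powr \<tau>1)"
  define be where "be = (\<lambda>t::nat. b / (real t + 1) powr \<tau>2)"
  define X where "X t \<omega> = est N adj H m al be \<rho> x0 (\<lambda>t i k. Hmul H i \<theta> k + v t i \<omega> k) t" for t \<omega>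
  define ex where "ex t j = integral\<^sup>L M (\<lambda>\<omega>. fst (X t \<omega>) j)" for t j
  define el where "el t j = integral\<^sup>L M (\<lambda>\<omega>. snd (X t \<omega>) j)" for t j
  define e where "e t = (\<lambda>j. ex t j - \<theta>)" for t
  define d where "d t j = el t j - ex t j" for t j
  define \<rho>0 where "\<rho>0 = Min (\<rho> ` {..<N})"
  have integ: "integrable M (\<lambda>\<omega>. fst (X t \<omega>) j) \<and> integrable M (\<lambda>\<omega>. snd (X t \<omega>) j)" if "j < N" for t j
  proof -
    have nz: "\<And>t i k. i < N \<Longrightarrow> k < m i \<Longrightarrow> integrable M (\<lambda>\<omega>. v t i \<omega> k)"
      using noise_zero_mean by blast
    show ?thesis unfolding X_def by (rule stoch_integrable[OF prob nz that])
  qed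
  have rec: "e (Suc t) i = Fm N adj H m (al t) (be t) (e t) i + be t *\<^sub>R (\<Sum>j\<in>{j. j < N \<and> adj i j}. d t j)"
    if i: "i < N" for t i
  proof -
    have "e (Suc t) i = (ex t i - \<theta>) - al t *\<^sub>R HTmul H m i (Hmul H i (ex t i - \<theta>))
      + be t *\<^sub>R (\<Sum>j\<in>{j. j < N \<and> adj i j}. el t j - ex t i)"
      unfolding e_def ex_def el_def X_def est_Suc_fst
    proof (rule integ_step_val[OF prob])
      show "integrable M (\<lambda>\<omega>. fst (est N adj H m al be \<rho> x0 (\<lambda>t i k. Hmul H i \<theta> k + v t i \<omega> k) t) i)"
        using integ[OF i, of t] unfolding X_def by blast
      show "integrable M (\<lambda>\<omega>. snd (est N adj H m al be \<rho> x0 (\<lambda>t i k. Hmul H i \<theta> k + v t i \<omega> k) t) j)"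
        if "j \<in> {j. j < N \<and> adj i j}" for j
        using integ[of j t] that unfolding X_def by blast
      show "integrable M (\<lambda>\<omega>. v t i \<omega> k) \<and> integral\<^sup>L M (\<lambda>\<omega>. v t i \<omega> k) = 0" if "k < m i" for k
        using noise_zero_mean[OF i that] .
    qed
    also have "\<dots> = Fm N adj H m (al t) (be t) (e t) i + be t *\<^sub>R (\<Sum>j\<in>{j. j < N \<and> adj i j}. d t j)"
    proof -
      have "(\<Sum>j\<in>{j. j < N \<and> adj i j}. el t j - ex t i) =
          (\<Sum>j\<in>{j. j < N \<and> adj i j}. e t j - e t i) + (\<Sum>j\<in>{j. j < N \<and> adj i j}. d t j)"
      proof -
        have "(\<Sum>j\<in>{j. j < N \<and> adj i j}. el t j - ex t i) = (\<Sum>j\<in>{j. j < N \<and> adj i j}. (e t j - e t i) + d t j)"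
          by (rule sum.cong) (simp_all add: e_def d_def)
        then show ?thesis by (simp only: sum.distrib)
      qed
      then show ?thesis unfolding Fm_def by (simp add: e_def scaleR_add_right)
    qed
    finally show ?thesis .
  qed
  have rho0_le: "\<rho>0 \<le> \<rho> j" if "j < N" for j
    unfolding \<rho>0_def using that by (intro Min_le) auto
  have dbound: "norm (d t j) \<le> (real t + 1) powr (- \<rho>0)" if j: "j < N" for t j
  proof -
    have ij: "integrable M (\<lambda>\<omega>. fst (X t \<omega>) j)" "integrable M (\<lambda>\<omega>. snd (X t \<omega>) j)" using integ j by auto
    have "d t j = integral\<^sup>L M (\<lambda>\<omega>. snd (X t \<omega>) j - fst (X t \<omega>) j)"
      using Bochner_Integration.integral_diff[OF ij(2) ij(1)] unfolding d_def el_def ex_def by simp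
    hence "norm (d t j) \<le> integral\<^sup>L M (\<lambda>\<omega>. norm (snd (X t \<omega>) j - fst (X t \<omega>) j))"
      by (simp only: integral_norm_bound)
    also have "\<dots> \<le> 1 / (real t + 1) powr \<rho> j"
    proof (rule P.integral_le_const)
      show "integrable M (\<lambda>\<omega>. norm (snd (X t \<omega>) j - fst (X t \<omega>) j))" using ij by auto
      show "AE \<omega> in M. norm (snd (X t \<omega>) j - fst (X t \<omega>) j) \<le> 1 / (real t + 1) powr \<rho> j"
      proof (rule AE_I2)
        fix \<omega>
        have "norm (snd (X t \<omega>) j - fst (X t \<omega>) j) = norm (fst (X t \<omega>) j - snd (X t \<omega>) j)"
          by (rule norm_minus_commute)
        also have "\<dots> \<le> 1 / (real t + 1) powr \<rho> j" unfolding X_def by (rule est_gap)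
        finally show "norm (snd (X t \<omega>) j - fst (X t \<omega>) j) \<le> 1 / (real t + 1) powr \<rho> j" .
      qed
    qed
    also have "\<dots> = (real t + 1) powr (- \<rho> j)" by (simp add: powr_minus_divide)
    also have "\<dots> \<le> (real t + 1) powr (- \<rho>0)"
      using powr_mono[of "- \<rho> j" "- \<rho>0" "real t + 1"] rho0_le[OF j] by simp
    finally show ?thesis .
  qed
  define \<kappa> where "\<kappa> = b / a"
  have kap: "\<kappa> > 0" using a_pos b_pos by (simp add: \<kappa>_def)
  obtain c where c: "c > 0" "\<And>f::nat \<Rightarrow> real^'n. c * Sn N f \<le> \<kappa> / 2 * Ed N adj f + Hq N H m f"
    using coerc[OF connected N_pos G_full_rank kap] by blast
  define u where "u t = L2_set (\<lambda>i. norm (e t i)) {..<N}" for t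
  define hh where "hh = hc N H m"
  have hh1: "hh \<ge> 1" unfolding hh_def by (rule hc_pos)
  have t1: "\<tau>1 > 0" using tau by simp
  have al_eq: "al t = a * (real t + 1) powr (- \<tau>1)" for t
    unfolding al_def by (simp add: powr_minus_divide)
  have be_eq: "be t = b * (real t + 1) powr (- \<tau>2)" for t
    unfolding be_def by (simp add: powr_minus_divide)
  have al_pos: "al t > 0" for t unfolding al_def using a_pos by simp
  have be_pos: "be t > 0" for t unfolding be_def using b_pos by simp
  have al_lim: "al \<longlonglongrightarrow> 0"
  proof -
    have "(\<lambda>t. (real t + 1) powr (- \<tau>1)) \<longlonglongrightarrow> 0" using t1 by real_asymp
    hence "(\<lambda>t. a * (real t + 1) powr (- \<tau>1)) \<longlonglongrightarrow> a * 0" by (intro tendsto_mult tendsto_const)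
    thus ?thesis unfolding al_eq[abs_def] by simp
  qed
  have be_lim: "be \<longlonglongrightarrow> 0"
  proof -
    have "(\<lambda>t. (real t + 1) powr (- \<tau>2)) \<longlonglongrightarrow> 0" using tau(1) by real_asymp
    hence "(\<lambda>t. b * (real t + 1) powr (- \<tau>2)) \<longlonglongrightarrow> b * 0" by (intro tendsto_mult tendsto_const)
    thus ?thesis unfolding be_eq[abs_def] by simp
  qed
  have ev1: "eventually (\<lambda>t. 2 * al t * hh \<le> 1 \<and> 4 * be t * real N \<le> 1 \<and> c * al t \<le> 1) sequentially"
  proof -
    have "eventually (\<lambda>t. al t < min (1 / (2 * hh)) (1 / c)) sequentially"
      using al_lim hh1 c(1) by (intro order_tendstoD(2)) auto
    moreover have "eventually (\<lambda>t. be t < 1 / (4 * real N)) sequentially"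
      using be_lim N_pos by (intro order_tendstoD(2)) auto
    ultimately show ?thesis
    proof eventually_elim
      case (elim t)
      have "2 * al t * hh \<le> 1" using elim(1) hh1 al_pos[of t] by (simp add: field_simps)
      moreover have "4 * be t * real N \<le> 1" using elim(2) N_pos be_pos[of t] by (simp add: field_simps)
      moreover have "c * al t \<le> 1" using elim(1) c(1) al_pos[of t] by (simp add: field_simps)
      ultimately show ?case by blast
    qed
  qed
  have kap_al: "\<kappa> * al t \<le> be t" for t
  proof -
    have "(real t + 1) powr \<tau>2 \<le> (real t + 1) powr \<tau>1" using tau by (intro powr_mono) auto
    moreover have "(real t + 1) powr \<tau>2 > 0" by simp
    ultimately have "b / (real t + 1) powr \<tau>1 \<le> b / (real t + 1) powr \<tau>2"
      using b_pos by (intro divide_left_mono) auto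
    thus ?thesis unfolding \<kappa>_def al_def be_def using a_pos by simp
  qed
  have al_low: "a / (real t + 1) \<le> al t" for t
  proof -
    have "(real t + 1) powr \<tau>1 \<le> (real t + 1) powr 1" using tau by (intro powr_mono) auto
    hence "(real t + 1) powr \<tau>1 \<le> real t + 1" by simp
    thus ?thesis unfolding al_def using a_pos by (intro divide_left_mono) auto
  qed
  define w where "w t = real N * (be t * real N * (real t + 1) powr (- \<rho>0))" for t
  define \<gamma> where "\<gamma> t = c * al t / 2" for t
  have step: "u (Suc t) \<le> (1 - \<gamma> t) * u t + w t"
    if h: "2 * al t * hh \<le> 1" "4 * be t * real N \<le> 1" "c * al t \<le> 1" for t
    unfolding u_def w_def \<gamma>_def
  proof (rule u_step[OF adj_sym _ _ _ _ _ c(1) kap_al _ c(2)])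
    show "0 \<le> al t" "0 \<le> be t" using al_pos[of t] be_pos[of t] by auto
    show "2 * al t * hc N H m \<le> 1" using h unfolding hh_def by simp
    show "4 * be t * real N \<le> 1" "c * al t \<le> 1" using h by auto
    show "0 \<le> \<kappa>" using kap by simp
    show "e (Suc t) i = Fm N adj H m (al t) (be t) (e t) i + be t *\<^sub>R (\<Sum>j\<in>{j. j < N \<and> adj i j}. d t j)"
      if "i < N" for i using rec[OF that] .
    show "norm (be t *\<^sub>R (\<Sum>j\<in>{j. j < N \<and> adj i j}. d t j)) \<le> be t * real N * (real t + 1) powr (- \<rho>0)"
      if "i < N" for i
    proof -
      have "norm (\<Sum>j\<in>{j. j < N \<and> adj i j}. d t j) \<le> (\<Sum>j\<in>{j. j < N \<and> adj i j}. norm (d t j))"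
        by (rule norm_sum)
      also have "\<dots> \<le> real (card {j. j < N \<and> adj i j}) * (real t + 1) powr (- \<rho>0)"
        using dbound by (intro sum_bounded_above) auto
      also have "\<dots> \<le> real N * (real t + 1) powr (- \<rho>0)"
      proof -
        have "card {j. j < N \<and> adj i j} \<le> card {..<N}" by (rule card_mono) auto
        thus ?thesis by (intro mult_right_mono) auto
      qed
      finally have "norm (\<Sum>j\<in>{j. j < N \<and> adj i j}. d t j) \<le> real N * (real t + 1) powr (- \<rho>0)" .
      hence "be t * norm (\<Sum>j\<in>{j. j < N \<and> adj i j}. d t j) \<le> be t * (real N * (real t + 1) powr (- \<rho>0))"
        using be_pos[of t] by (intro mult_left_mono) auto
      thus ?thesis using be_pos[of t] by (simp add: mult.assoc)
    qed
  qed
  have wlim: "eventually (\<lambda>t. w t \<le> \<epsilon> * \<gamma> t) sequentially" if eps: "\<epsilon> > 0" for \<epsilon>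
  proof -
    define \<delta> where "\<delta> = \<rho>0 + \<tau>2 - \<tau>1"
    have dpos: "\<delta> > 0" using rho0 unfolding \<delta>_def \<rho>0_def by simp
    define K where "K = real N * real N * b"
    have Kpos: "K > 0" unfolding K_def using N_pos b_pos by simp
    have "(\<lambda>t. (real t + 1) powr (- \<delta>)) \<longlonglongrightarrow> 0" using dpos by real_asymp
    hence "eventually (\<lambda>t. (real t + 1) powr (- \<delta>) < \<epsilon> * c * a / (2 * K)) sequentially"
      using eps c(1) a_pos Kpos by (intro order_tendstoD(2)) auto
    then show ?thesis
    proof eventually_elim
      case (elim t)
      have pw: "(real t + 1) powr (- \<tau>2) * (real t + 1) powr (- \<rho>0)
          = (real t + 1) powr (- \<delta>) * (real t + 1) powr (- \<tau>1)"
        unfolding \<delta>_def by (simp add: powr_add[symmetric] add.commute)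
      have "w t = K * ((real t + 1) powr (- \<delta>) * (real t + 1) powr (- \<tau>1))"
        unfolding w_def K_def be_eq pw[symmetric] by (simp add: algebra_simps)
      also have "\<dots> \<le> K * ((\<epsilon> * c * a / (2 * K)) * (real t + 1) powr (- \<tau>1))"
        using elim Kpos by (intro mult_left_mono mult_right_mono) auto
      also have "\<dots> = \<epsilon> * \<gamma> t"
        unfolding \<gamma>_def al_eq using Kpos by (simp add: field_simps)
      finally show ?case .
    qed
  qed
  have ulim: "u \<longlonglongrightarrow> 0"
  proof (rule scalar_conv[where cz = "c * a / 2"])
    show "0 \<le> u t" for t unfolding u_def by simp
    show "0 < c * a / 2" using c(1) a_pos by simp
    show "eventually (\<lambda>\<epsilon>. w \<epsilon> \<le> e' * \<gamma> \<epsilon>) sequentially" if "e' > 0" for e' using wlim[OF that] .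
    show "eventually (\<lambda>t. 0 \<le> \<gamma> t \<and> \<gamma> t \<le> 1 \<and> c * a / 2 / (real t + 1) \<le> \<gamma> t
              \<and> u (Suc t) \<le> (1 - \<gamma> t) * u t + w t) sequentially"
      using ev1
    proof eventually_elim
      case (elim t)
      have "0 \<le> \<gamma> t" unfolding \<gamma>_def using c(1) al_pos[of t] by simp
      moreover have "\<gamma> t \<le> 1" unfolding \<gamma>_def using elim by simp
      moreover have "c * a / 2 / (real t + 1) \<le> \<gamma> t"
      proof -
        have "c / 2 * (a / (real t + 1)) \<le> c / 2 * al t" using al_low[of t] c(1) by (intro mult_left_mono) auto
        thus ?thesis unfolding \<gamma>_def by simp
      qed
      moreover have "u (Suc t) \<le> (1 - \<gamma> t) * u t + w t" using step elim by blast
      ultimately show ?case by blast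
    qed
  qed
  have "(\<lambda>t. ex t i) \<longlonglongrightarrow> \<theta>" if i: "i < N" for i
  proof -
    have "(\<lambda>t. e t i) \<longlonglongrightarrow> 0"
    proof (rule Lim_null_comparison[OF _ ulim])
      show "eventually (\<lambda>t. norm (e t i) \<le> u t) sequentially"
        unfolding u_def using i by (intro always_eventually allI member_le_L2_set) auto
    qed
    hence "(\<lambda>t. e t i + \<theta>) \<longlonglongrightarrow> 0 + \<theta>" by (intro tendsto_add tendsto_const)
    thus ?thesis unfolding e_def by simp
  qed
  thus ?thesis unfolding ex_def X_def al_def be_def by blast
qed


end
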